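(* Let $n$ be a positive integer and let $\theta=\lambda/\mu$ be a skew Young diagram such that every column of $\theta$ contains at most $n$ boxes. Then the number $|\mathrm{SVT}(\theta,n)|$ of set-valued tableaux of shape $\theta$ with entries in $[n]=\{1,\dots,n\}$ is odd.
   Context: A partition $\lambda=(\lambda_1\ge\lambda_2\ge\cdots\ge 0)$ is identified with its Young diagram $\{(i,j)\in\mathbb{Z}_{>0}^2 : j\le\lambda_i\}$ (row index $i$ increasing downward, column index $j$ increasing to the right). For partitions $\mu\subseteq\lambda$, the skew Young diagram $\theta=\lambda/\mu$ is the set-theoretic difference $\lambda\setminus\mu$, and $|\theta|$ is its number of boxes. A set-valued tableau of shape $\theta$ with entries in $[n]$ is an assignment of a non-empty subset $T_{i,j}\subseteq[n]$ to each box $(i,j)\in\theta$ such that $\max T_{i,j}\le\min T_{i,j+1}$ whenever $(i,j),(i,j+1)\in\theta$, and $\max T_{i,j}<\min T_{i+1,j}$ whenever $(i,j),(i+1,j)\in\theta$. $\mathrm{SVT}(\theta,n)$ denotes the set of all such tableaux. *)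

theory Defs
  imports Main
begin

text \<open>We represent it as a
  function nat => nat, with the (unused) value at index 0 normalised to 0.\<close>
definition is_partition :: "(nat \<Rightarrow> nat) \<Rightarrow> bool" where
  "is_partition lam \<longleftrightarrow> lam 0 = 0 \<and> (\<forall>i j. 1 \<le> i \<and> i \<le> j \<longrightarrow> lam j \<le> lam i)
     \<and> finite {i. lam i \<noteq> 0}"

definition young :: "(nat \<Rightarrow> nat) \<Rightarrow> (nat \<times> nat) set" where
  "young lam = {(i, j). 1 \<le> i \<and> 1 \<le> j \<and> j \<le> lam i}"

definition skew :: "(nat \<Rightarrow> nat) \<Rightarrow> (nat \<Rightarrow> nat) \<Rightarrow> (nat \<times> nat) set" where
  "skew lam mu = young lam - young mu"

text \<open>A tableau is a map
  from boxes to sets; boxes outside theta are assigned the empty set (so that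
  SVT is a set of genuinely distinct assignments on theta).\<close>
definition SVT :: "(nat \<times> nat) set \<Rightarrow> nat \<Rightarrow> (nat \<times> nat \<Rightarrow> nat set) set" where
  "SVT theta n = {T.
     (\<forall>b. b \<notin> theta \<longrightarrow> T b = {}) \<and>
     (\<forall>b\<in>theta. T b \<noteq> {} \<and> T b \<subseteq> {1..n}) \<and>
     (\<forall>i j. (i, j) \<in> theta \<and> (i, j + 1) \<in> theta \<longrightarrow> Max (T (i, j)) \<le> Min (T (i, j + 1))) \<and>
     (\<forall>i j. (i, j) \<in> theta \<and> (i + 1, j) \<in> theta \<longrightarrow> Max (T (i, j)) < Min (T (i + 1, j)))}"

end

theory Submission imports Defs begin

definition convex :: "(nat \<times> nat) set \<Rightarrow> bool" where
  "convex th \<longleftrightarrow> (\<forall>i j. (i, j) \<in> th \<and> (i+1, j+1) \<in> th \<longrightarrow> (i+1, j) \<in> th)"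

definition Dset :: "(nat \<times> nat) set \<Rightarrow> (nat \<times> nat) set" where
  "Dset th = {b \<in> th. (fst b + 1, snd b) \<notin> th}"

definition Tog :: "(nat \<times> nat) set \<Rightarrow> nat \<Rightarrow> (nat \<times> nat \<Rightarrow> nat set) \<Rightarrow> (nat \<times> nat) set" where
  "Tog th N T = {b \<in> Dset th. T b \<noteq> {N} \<and> ((fst b, snd b + 1) \<notin> th \<or> T (fst b, snd b + 1) = {N})}"

definition tog :: "nat \<Rightarrow> (nat \<times> nat \<Rightarrow> nat set) \<Rightarrow> nat \<times> nat \<Rightarrow> (nat \<times> nat \<Rightarrow> nat set)" where
  "tog N T b = T(b := (if N \<in> T b then T b - {N} else insert N (T b)))"

lemma inv_even:
  assumes "finite A" "\<forall>x\<in>A. f x \<in> A \<and> f (f x) = x \<and> f x \<noteq> x"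
  shows "even (card A)"
  using assms
proof (induction "card A" arbitrary: A rule: less_induct)
  case less
  show ?case
  proof (cases "A = {}")
    case True then show ?thesis by simp
  next
    case False
    then obtain x where x: "x \<in> A" by blast
    let ?B = "A - {x, f x}"
    have fx: "f x \<in> A" "f x \<noteq> x" using less.prems x by auto
    have cB: "card A = card ?B + 2"
    proof -
      have "card ?B = card A - card {x, f x}"
        using less.prems(1) x fx by (subst card_Diff_subset) auto
      moreover have "card {x, f x} = 2" using fx by auto
      moreover have "card A \<ge> 2" using \<open>card {x, f x} = 2\<close> less.prems(1) x fx
        by (metis card_mono empty_subsetI insert_subset)
      ultimately show ?thesis by simp
    qed
    have "\<forall>y\<in>?B. f y \<in> ?B \<and> f (f y) = y \<and> f y \<noteq> y"
      using less.prems fx x by (metis DiffD1 DiffD2 DiffI insertCI insertE singletonD)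
    then have "even (card ?B)" using less.hyps[of ?B] cB less.prems(1) by simp
    then show ?thesis using cB by simp
  qed
qed

lemma finite_SVT: "finite th \<Longrightarrow> finite (SVT th n)"
proof -
  assume f: "finite th"
  have "SVT th n \<subseteq> {f. \<forall>x. (x \<in> th \<longrightarrow> f x \<in> Pow {1..n}) \<and> (x \<notin> th \<longrightarrow> f x = {})}"
    unfolding SVT_def by auto
  moreover have "finite {f. \<forall>x. (x \<in> th \<longrightarrow> f x \<in> Pow {1..n}) \<and> (x \<notin> th \<longrightarrow> f x = {})}"
    by (rule finite_set_of_finite_funs) (use f in auto)
  ultimately show ?thesis by (rule finite_subset)
qed

lemma Min_remove: "finite X \<Longrightarrow> N \<in> X \<Longrightarrow> X \<noteq> {N} \<Longrightarrow> X \<subseteq> {1..N} \<Longrightarrow> Min (X - {N}) = Min X"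
proof -
  assume a: "finite X" "N \<in> X" "X \<noteq> {N}" "X \<subseteq> {1..N}"
  then obtain y where y: "y \<in> X" "y \<noteq> N" by blast
  then have "y < N" using a by force
  then have "Min X < N" using a y by (meson Min_le le_less_trans)
  moreover have "Min X \<in> X" using a by (intro Min_in) auto
  ultimately have "Min X \<in> X - {N}" by auto
  then show ?thesis using a
    by (metis Diff_iff Diff_subset Min_antimono Min_le antisym empty_iff finite_Diff)
qed

lemma Min_ins: "finite X \<Longrightarrow> X \<noteq> {} \<Longrightarrow> X \<subseteq> {1..N} \<Longrightarrow> Min (insert N X) = Min X"
proof -
  assume a: "finite X" "X \<noteq> {}" "X \<subseteq> {1..N}"
  have "Min X \<le> N" using a Min_in by fastforce
  then show ?thesis using a Min_insert[of X N] by (simp add: min_absorb2)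
qed

lemma tog_props:
  assumes "T \<in> SVT th N" "b \<in> Tog th N T"
  shows "tog N T b \<in> SVT th N" "Tog th N (tog N T b) = Tog th N T"
    "tog N (tog N T b) b = T" "tog N T b \<noteq> T"
proof -
  let ?X = "T b"
  let ?X' = "if N \<in> T b then T b - {N} else insert N (T b)"
  have bth: "b \<in> th" and bD: "(fst b + 1, snd b) \<notin> th" and bX: "?X \<noteq> {N}"
    and bR: "(fst b, snd b + 1) \<notin> th \<or> T (fst b, snd b + 1) = {N}"
    using assms(2) unfolding Tog_def Dset_def by auto
  have S: "\<forall>c. c \<notin> th \<longrightarrow> T c = {}" "\<forall>c\<in>th. T c \<noteq> {} \<and> T c \<subseteq> {1..N}"
    "\<forall>i j. (i, j) \<in> th \<and> (i, j + 1) \<in> th \<longrightarrow> Max (T (i, j)) \<le> Min (T (i, j + 1))"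
    "\<forall>i j. (i, j) \<in> th \<and> (i + 1, j) \<in> th \<longrightarrow> Max (T (i, j)) < Min (T (i + 1, j))"
    using assms(1) unfolding SVT_def by auto
  have Xne: "?X \<noteq> {}" and Xsub: "?X \<subseteq> {1..N}" using S(2) bth by auto
  have Xfin: "finite ?X" using Xsub finite_subset by blast
  have X'ne: "?X' \<noteq> {}" using Xne bX by auto
  have X'sub: "?X' \<subseteq> {1..N}" using Xsub Xne by auto
  have X'fin: "finite ?X'" using X'sub finite_subset by blast
  have minX': "Min ?X' = Min ?X"
    using Min_remove[OF Xfin _ bX Xsub] Min_ins[OF Xfin Xne Xsub] by auto
  have maxX': "Max ?X' \<le> Max ?X \<or> (N \<notin> ?X \<and> Max ?X' = N)"
  proof (cases "N \<in> ?X")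
    case True
    then show ?thesis using Xfin X'ne by (simp add: Max_mono)
  next
    case False
    have "Max ?X' \<le> N" using X'sub X'fin X'ne Max_in by fastforce
    moreover have "N \<le> Max ?X'" using False X'fin by (simp add: Max_ge)
    ultimately show ?thesis using False by auto
  qed
  have maxIns: "Max ?X' = N" if nX: "N \<notin> ?X"
  proof -
    have "Max ?X' \<le> N" using X'sub X'fin X'ne Max_in by fastforce
    moreover have "N \<le> Max ?X'" using nX X'fin by (simp add: Max_ge)
    ultimately show ?thesis by simp
  qed
  have X'N: "?X' \<noteq> {N}" using Xne bX by auto
  have tb: "tog N T b = T(b := ?X')" unfolding tog_def by simp
  show "tog N T b \<in> SVT th N"
    unfolding SVT_def tb
  proof (intro CollectI conjI allI impI ballI)
    fix c assume c: "c \<notin> th"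
    then have "T c = {}" using S(1) by blast
    then show "(T(b := ?X')) c = {}" using c bth by auto
  next
    fix c assume "c \<in> th" then show "(T(b := ?X')) c \<noteq> {}" "(T(b := ?X')) c \<subseteq> {1..N}"
      using S(2) X'ne X'sub by auto
  next
    fix i j assume a: "(i, j) \<in> th \<and> (i, j + 1) \<in> th"
    show "Max ((T(b := ?X')) (i, j)) \<le> Min ((T(b := ?X')) (i, j + 1))"
    proof (cases "b = (i, j)")
      case True
      then have bj: "b \<noteq> (i, j+1)" by auto
      show ?thesis
      proof (cases "N \<in> ?X")
        case True
        then have "Max ?X' \<le> Max ?X" using maxX' by auto
        then show ?thesis using S(3) a bj \<open>b = (i,j)\<close> by fastforce
      next
        case False
        have "T (i, j+1) = {N}" using bR a \<open>b = (i,j)\<close> by auto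
        moreover have "Max ?X' = N" using False maxIns by blast
        ultimately show ?thesis using bj \<open>b = (i,j)\<close> by simp
      qed
    next
      case False
      then show ?thesis using S(3) a minX' by (cases "b = (i, j+1)") auto
    qed
  next
    fix i j assume a: "(i, j) \<in> th \<and> (i + 1, j) \<in> th"
    have "b \<noteq> (i, j)" using bD a by auto
    then show "Max ((T(b := ?X')) (i, j)) < Min ((T(b := ?X')) (i + 1, j))"
      using S(4) a minX' by (cases "b = (i+1, j)") auto
  qed
  have "\<forall>c. ((tog N T b) c = {N}) = (T c = {N})" using tb X'N bX by auto
  then show "Tog th N (tog N T b) = Tog th N T" unfolding Tog_def by (metis (no_types, lifting))
  show "tog N (tog N T b) b = T" unfolding tog_def
    using Xne by (auto simp: insert_absorb)
  show "tog N T b \<noteq> T"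
  proof
    assume "tog N T b = T"
    then have "?X' = ?X" using tb by (metis fun_upd_same)
    then show False by (cases "N \<in> ?X") auto
  qed
qed


lemma SVT_D:
  assumes "T \<in> SVT th N"
  shows "\<And>c. c \<notin> th \<Longrightarrow> T c = {}" "\<And>c. c \<in> th \<Longrightarrow> T c \<noteq> {}" "\<And>c. c \<in> th \<Longrightarrow> T c \<subseteq> {1..N}"
    "\<And>i j. (i, j) \<in> th \<Longrightarrow> (i, j + 1) \<in> th \<Longrightarrow> Max (T (i, j)) \<le> Min (T (i, j + 1))"
    "\<And>i j. (i, j) \<in> th \<Longrightarrow> (i + 1, j) \<in> th \<Longrightarrow> Max (T (i, j)) < Min (T (i + 1, j))"
  using assms unfolding SVT_def by auto

lemma Tog_empty:
  assumes "T \<in> SVT th N" "finite th" "convex th"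
  shows "Tog th N T = {} \<longleftrightarrow> (\<forall>d\<in>Dset th. T d = {N})"
proof
  assume "\<forall>d\<in>Dset th. T d = {N}" then show "Tog th N T = {}" unfolding Tog_def by auto
next
  assume E0: "Tog th N T = {}"
  show "\<forall>d\<in>Dset th. T d = {N}"
  proof (rule ccontr)
    assume "\<not> (\<forall>d\<in>Dset th. T d = {N})"
    define E where "E = {d \<in> Dset th. T d \<noteq> {N}}"
    have Ene: "E \<noteq> {}" using \<open>\<not> _\<close> E_def by auto
    have Efin: "finite E" using assms(2) unfolding E_def Dset_def by auto
    define M where "M = Max (snd ` E)"
    have "M \<in> snd ` E" unfolding M_def using Ene Efin by (intro Max_in) auto
    then obtain p q where pq: "(p, q) \<in> E" "q = M" by auto
    have Mge: "\<And>e. e \<in> E \<Longrightarrow> snd e \<le> M" unfolding M_def using Efin by auto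
    have "(p, q) \<notin> Tog th N T" using E0 by auto
    then have R: "(p, q+1) \<in> th" "T (p, q+1) \<noteq> {N}" using pq(1) unfolding Tog_def E_def by auto
    have pqth: "(p, q) \<in> th" "(p+1, q) \<notin> th" using pq(1) unfolding E_def Dset_def by auto
    have "(p+1, q+1) \<notin> th" using assms(3) pqth R(1) unfolding convex_def by blast
    then have "(p, q+1) \<in> E" using R unfolding E_def Dset_def by auto
    then have "q + 1 \<le> M" using Mge by fastforce
    then show False using pq(2) by simp
  qed
qed

lemma fix_bij:
  assumes "convex th"
  shows "bij_betw (\<lambda>T b. if b \<in> Dset th then {} else T b)
     {T \<in> SVT th (Suc m). \<forall>d\<in>Dset th. T d = {Suc m}} (SVT (th - Dset th) m)"
proof (rule bij_betw_byWitness[where f' = "\<lambda>U b. if b \<in> Dset th then {Suc m} else U b"])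
  let ?D = "Dset th"
  show "\<forall>T\<in>{T \<in> SVT th (Suc m). \<forall>d\<in>?D. T d = {Suc m}}.
        (\<lambda>b. if b \<in> ?D then {Suc m} else (if b \<in> ?D then {} else T b)) = T"
  proof
    fix T assume T: "T \<in> {T \<in> SVT th (Suc m). \<forall>d\<in>?D. T d = {Suc m}}"
    show "(\<lambda>b. if b \<in> ?D then {Suc m} else (if b \<in> ?D then {} else T b)) = T"
    proof
      fix b show "(if b \<in> ?D then {Suc m} else (if b \<in> ?D then {} else T b)) = T b"
        using T by (cases "b \<in> ?D") auto
    qed
  qed
  show "\<forall>U\<in>SVT (th - ?D) m. (\<lambda>b. if b \<in> ?D then {} else (if b \<in> ?D then {Suc m} else U b)) = U"
  proof
    fix U assume U: "U \<in> SVT (th - ?D) m"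
    show "(\<lambda>b. if b \<in> ?D then {} else (if b \<in> ?D then {Suc m} else U b)) = U"
    proof
      fix b show "(if b \<in> ?D then {} else (if b \<in> ?D then {Suc m} else U b)) = U b"
        using SVT_D(1)[OF U, of b] by auto
    qed
  qed
  show "(\<lambda>T b. if b \<in> ?D then {} else T b) ` {T \<in> SVT th (Suc m). \<forall>d\<in>?D. T d = {Suc m}}
        \<subseteq> SVT (th - ?D) m"
  proof (rule image_subsetI)
    fix T assume "T \<in> {T \<in> SVT th (Suc m). \<forall>d\<in>?D. T d = {Suc m}}"
    then have T: "T \<in> SVT th (Suc m)" by auto
    note S = SVT_D[OF T]
    show "(\<lambda>b. if b \<in> ?D then {} else T b) \<in> SVT (th - ?D) m"
      unfolding SVT_def
    proof (intro CollectI conjI allI impI ballI)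
      fix c assume "c \<notin> th - ?D" then show "(if c \<in> ?D then {} else T c) = {}"
        using S(1)[of c] by auto
    next
      fix c assume c: "c \<in> th - ?D"
      then show "(if c \<in> ?D then {} else T c) \<noteq> {}" using S(2)[of c] by auto
      obtain i j where cij: "c = (i, j)" by fastforce
      have below: "(i+1, j) \<in> th" using c cij unfolding Dset_def by auto
      have ne: "T (i+1, j) \<noteq> {}" "T (i+1,j) \<subseteq> {1..Suc m}" using S(2,3) below by auto
      have fin: "finite (T (i+1,j))" using ne(2) finite_subset by blast
      have "Min (T (i+1,j)) \<in> T (i+1,j)" using ne fin by (intro Min_in) auto
      then have mn: "Min (T (i+1,j)) \<le> Suc m" using ne(2) by auto
      have lt: "Max (T c) < Min (T (i+1,j))" using S(5)[of i j] c cij below by auto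
      have cfin: "finite (T c)" using S(3)[of c] c finite_subset by blast
      have "T c \<subseteq> {1..m}"
      proof
        fix x assume x: "x \<in> T c"
        have "x \<le> Max (T c)" using x cfin by simp
        moreover have "1 \<le> x" using x S(3)[of c] c by auto
        ultimately show "x \<in> {1..m}" using lt mn by auto
      qed
      then show "(if c \<in> ?D then {} else T c) \<subseteq> {1..m}" using c by auto
    next
      fix i j assume "(i, j) \<in> th - ?D \<and> (i, j + 1) \<in> th - ?D"
      then show "Max (if (i, j) \<in> ?D then {} else T (i, j)) \<le> Min (if (i, j + 1) \<in> ?D then {} else T (i, j + 1))"
        using S(4)[of i j] by auto
    next
      fix i j assume "(i, j) \<in> th - ?D \<and> (i + 1, j) \<in> th - ?D"
      then show "Max (if (i, j) \<in> ?D then {} else T (i, j)) < Min (if (i + 1, j) \<in> ?D then {} else T (i + 1, j))"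
        using S(5)[of i j] by auto
    qed
  qed
  show "(\<lambda>U b. if b \<in> ?D then {Suc m} else U b) ` SVT (th - ?D) m
        \<subseteq> {T \<in> SVT th (Suc m). \<forall>d\<in>?D. T d = {Suc m}}"
  proof (rule image_subsetI)
    fix U assume U: "U \<in> SVT (th - ?D) m"
    note S = SVT_D[OF U]
    have Ule: "\<And>c. c \<in> th - ?D \<Longrightarrow> Max (U c) \<le> m"
    proof -
      fix c assume c: "c \<in> th - ?D"
      have "U c \<noteq> {}" "U c \<subseteq> {1..m}" using S(2)[of c] S(3)[of c] c by auto
      moreover then have "finite (U c)" using finite_subset by blast
      ultimately show "Max (U c) \<le> m" using Max_in by fastforce
    qed
    have Dth: "?D \<subseteq> th" unfolding Dset_def by auto
    have "(\<lambda>b. if b \<in> ?D then {Suc m} else U b) \<in> SVT th (Suc m)"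
      unfolding SVT_def
    proof (intro CollectI conjI allI impI ballI)
      fix c assume "c \<notin> th" then show "(if c \<in> ?D then {Suc m} else U c) = {}"
        using S(1)[of c] Dth by auto
    next
      fix c assume c: "c \<in> th"
      show "(if c \<in> ?D then {Suc m} else U c) \<noteq> {}" using S(2)[of c] c by auto
      show "(if c \<in> ?D then {Suc m} else U c) \<subseteq> {1..Suc m}" using S(3)[of c] c by (cases "c \<in> ?D") auto
    next
      fix i j assume a: "(i, j) \<in> th \<and> (i, j + 1) \<in> th"
      show "Max (if (i, j) \<in> ?D then {Suc m} else U (i, j)) \<le> Min (if (i, j + 1) \<in> ?D then {Suc m} else U (i, j + 1))"
      proof (cases "(i, j) \<in> ?D")
        case True
        then have "(i+1, j) \<notin> th" unfolding Dset_def by auto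
        then have "(i+1, j+1) \<notin> th" using assms a unfolding convex_def by blast
        then have "(i, j+1) \<in> ?D" using a unfolding Dset_def by auto
        then show ?thesis using True by simp
      next
        case False
        show ?thesis
        proof (cases "(i, j+1) \<in> ?D")
          case True
          then show ?thesis using False Ule[of "(i,j)"] a by auto
        next
          case False2: False
          then show ?thesis using False S(4)[of i j] a by auto
        qed
      qed
    next
      fix i j assume a: "(i, j) \<in> th \<and> (i + 1, j) \<in> th"
      then have nD: "(i, j) \<notin> ?D" unfolding Dset_def by auto
      show "Max (if (i, j) \<in> ?D then {Suc m} else U (i, j)) < Min (if (i + 1, j) \<in> ?D then {Suc m} else U (i + 1, j))"
      proof (cases "(i+1, j) \<in> ?D")
        case True
        then show ?thesis using nD Ule[of "(i,j)"] a by auto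
      next
        case False
        then show ?thesis using nD S(5)[of i j] a by auto
      qed
    qed
    then show "(\<lambda>b. if b \<in> ?D then {Suc m} else U b) \<in> {T \<in> SVT th (Suc m). \<forall>d\<in>?D. T d = {Suc m}}"
      by auto
  qed
qed


lemma col_finite: "finite th \<Longrightarrow> finite {i. (i, j) \<in> th}"
proof -
  assume f: "finite th"
  have "{i. (i, j) \<in> th} \<subseteq> fst ` th" by force
  then show ?thesis using f finite_subset by blast
qed

lemma col_bound:
  assumes "finite th" "card {i. (i, j) \<in> th} \<le> Suc m"
  shows "card {i. (i, j) \<in> th - Dset th} \<le> m"
proof (cases "{i. (i, j) \<in> th} = {}")
  case True
  then show ?thesis by simp
next
  case False
  let ?C = "{i. (i, j) \<in> th}"
  have fC: "finite ?C" by (rule col_finite[OF assms(1)])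
  define M where "M = Max ?C"
  have M: "M \<in> ?C" unfolding M_def using fC False by (intro Max_in)
  have "M + 1 \<notin> ?C" using Max_ge[OF fC, of "M+1"] M_def by auto
  then have "(M, j) \<in> Dset th" using M unfolding Dset_def by auto
  then have "{i. (i, j) \<in> th - Dset th} \<subseteq> ?C - {M}" by auto
  then have "card {i. (i, j) \<in> th - Dset th} \<le> card (?C - {M})"
    using fC by (intro card_mono) auto
  also have "\<dots> = card ?C - 1" using M fC by simp
  finally show ?thesis using assms(2) by simp
qed

lemma convex_minus: "convex th \<Longrightarrow> convex (th - Dset th)"
  unfolding convex_def Dset_def by auto

lemma main_lemma:
  "\<forall>th. finite th \<longrightarrow> convex th \<longrightarrow> (\<forall>j. card {i. (i, j) \<in> th} \<le> n) \<longrightarrow> odd (card (SVT th n))"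
proof (induction n)
  case 0
  show ?case
  proof (intro allI impI)
    fix th :: "(nat \<times> nat) set"
    assume f: "finite th" and c: "convex th" and b: "\<forall>j. card {i. (i, j) \<in> th} \<le> 0"
    have "th = {}"
    proof (rule ccontr)
      assume "th \<noteq> {}"
      then obtain i j where "(i, j) \<in> th" by auto
      then have "{i. (i, j) \<in> th} \<noteq> {}" by auto
      then have "card {i. (i, j) \<in> th} \<noteq> 0" using col_finite[OF f] by auto
      then show False using b by auto
    qed
    moreover have "SVT {} 0 = {\<lambda>_. {}}" unfolding SVT_def by auto
    ultimately show "odd (card (SVT th 0))" by simp
  qed
next
  case (Suc m)
  show ?case
  proof (intro allI impI)
    fix th :: "(nat \<times> nat) set"
    assume f: "finite th" and c: "convex th" and b: "\<forall>j. card {i. (i, j) \<in> th} \<le> Suc m"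
    let ?N = "Suc m"
    let ?S = "SVT th ?N"
    let ?D = "Dset th"
    let ?F = "{T \<in> ?S. \<forall>d\<in>?D. T d = {?N}}"
    let ?NF = "{T \<in> ?S. Tog th ?N T \<noteq> {}}"
    have fS: "finite ?S" using finite_SVT[OF f] .
    have Sun: "?S = ?F \<union> ?NF" using Tog_empty[OF _ f c] by blast
    have Sdis: "?F \<inter> ?NF = {}" using Tog_empty[OF _ f c] by blast
    have fF: "finite ?F" using fS by auto
    have fNF: "finite ?NF" using fS by auto
    have cU: "card (?F \<union> ?NF) = card ?F + card ?NF" by (rule card_Un_disjoint[OF fF fNF Sdis])
    have cS: "card ?S = card ?F + card ?NF"
      using arg_cong[OF Sun, of card] cU by linarith
    have "card ?F = card (SVT (th - ?D) m)"
      using fix_bij[OF c, of m] by (rule bij_betw_same_card)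
    moreover have "odd (card (SVT (th - ?D) m))"
      using Suc.IH f c b col_bound[OF f] convex_minus[OF c] by auto
    ultimately have oF: "odd (card ?F)" by simp
    define iota where "iota = (\<lambda>T. tog ?N T (SOME b. b \<in> Tog th ?N T))"
    have "even (card ?NF)"
    proof (rule inv_even)
      show "finite ?NF" using fS by auto
      show "\<forall>x\<in>?NF. iota x \<in> ?NF \<and> iota (iota x) = x \<and> iota x \<noteq> x"
      proof
        fix T assume T: "T \<in> ?NF"
        define b where "b = (SOME b. b \<in> Tog th ?N T)"
        have Tne: "Tog th ?N T \<noteq> {}" using T by blast
        have bT: "b \<in> Tog th ?N T" unfolding b_def using Tne by (simp add: some_in_eq)
        have TS: "T \<in> ?S" using T by auto
        note P = tog_props[OF TS bT]
        have iT: "iota T = tog ?N T b" unfolding iota_def b_def by simp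
        have gen: "iota (iota T) = tog ?N (iota T) (SOME c. c \<in> Tog th ?N (iota T))"
          unfolding iota_def by (rule refl)
        have iiT: "iota (iota T) = tog ?N (tog ?N T b) b"
        proof -
          have "iota (iota T) = tog ?N (tog ?N T b) (SOME c. c \<in> Tog th ?N (tog ?N T b))"
            using gen iT by simp
          also have "\<dots> = tog ?N (tog ?N T b) b" unfolding P(2) b_def[symmetric] by (rule refl)
          finally show ?thesis .
        qed
        show "iota T \<in> ?NF \<and> iota (iota T) = T \<and> iota T \<noteq> T"
          using P T iT iiT by auto
      qed
    qed
    then show "odd (card ?S)" using cS oF by simp
  qed
qed

lemma skew_convex:
  assumes "is_partition mu"
  shows "convex (skew lam mu)"
  unfolding convex_def
proof (intro allI impI)
  fix i j assume a: "(i, j) \<in> skew lam mu \<and> (i + 1, j + 1) \<in> skew lam mu"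
  have mono: "mu (i+1) \<le> mu i" "1 \<le> i" using assms a unfolding is_partition_def skew_def young_def by auto
  show "(i + 1, j) \<in> skew lam mu"
    using a mono unfolding skew_def young_def by auto
qed

lemma skew_finite:
  assumes "is_partition lam"
  shows "finite (skew lam mu)"
proof -
  have fin: "finite {i. lam i \<noteq> 0}" using assms unfolding is_partition_def by auto
  have "young lam \<subseteq> {i. lam i \<noteq> 0} \<times> {..lam 1}"
  proof
    fix x assume x: "x \<in> young lam"
    obtain i j where xij: "x = (i, j)" by fastforce
    have "1 \<le> i" "1 \<le> j" "j \<le> lam i" using x xij unfolding young_def by auto
    moreover then have "lam i \<le> lam 1" using assms unfolding is_partition_def by auto
    ultimately show "x \<in> {i. lam i \<noteq> 0} \<times> {..lam 1}" using xij by auto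
  qed
  then have "finite (young lam)" using fin finite_subset by blast
  then show ?thesis unfolding skew_def by auto
qed

theorem theorem3p1:
  fixes n :: nat and lam mu :: "nat \<Rightarrow> nat"
  assumes "n \<ge> 1"
    and "is_partition lam" and "is_partition mu"
    and "young mu \<subseteq> young lam"
    and "\<forall>j. card {i. (i, j) \<in> skew lam mu} \<le> n"
  shows "odd (card (SVT (skew lam mu) n))"
  using main_lemma skew_finite[OF assms(2)] skew_convex[OF assms(3)] assms(5) by blast

end
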